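(* For every map $M$, any two members of $\Gamma(M)$ have the same deficiency.
   Context: A map is a triple $X=(C_X,v_X,f_X)$ where $C_X$ is a finite cubic graph (multiple edges allowed) and $v_X,f_X$ are disjoint perfect matchings whose union is a disjoint union of 4-cycles, the squares of $X$. $a_X=E(C_X)\setminus(v_X\cup f_X)$; $z_X$ is the perfect matching on $V(C_X)$ of diagonals of the squares; $Q_X=C_X\cup z_X$. $G_X$ has as vertices the cycles of $v_X\cup a_X$, as edges the squares of $X$, each square joining the cycles containing its two $v_X$-edges. The dual of $X$ is $(C_X,f_X,v_X)$ and the phial is $(Q_X\setminus v_X,z_X,f_X)$; the edge sets of the graphs of $X$, its dual and its phial are all identified with the squares of $X$. With $V_X,F_X,Z_X$ the $GF(2)$-coboundary spaces of the graphs of $X$, its dual and its phial, and $V_X^\perp$ the cycle space of $G_X$ (orthogonal complement w.r.t. $\langle A,B\rangle=|A\cap B|\bmod2$), the deficiency is $\mathrm{def}(X)=\dim V_X^\perp-\dim(F_X+Z_X)$ (one has $F_X+Z_X\subseteq V_X^\perp$). For a map $M$, $\Gamma(M)$ is the set of the six maps $(Q_M\setminus z_M,v_M,f_M)$, $(Q_M\setminus z_M,f_M,v_M)$, $(Q_M\setminus v_M,f_M,z_M)$, $(Q_M\setminus v_M,z_M,f_M)$, $(Q_M\setminus f_M,z_M,v_M)$, $(Q_M\setminus f_M,v_M,z_M)$. *)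

theory Defs
  imports Main "HOL.Vector_Spaces" "HOL-Library.Z2" "HOL-Library.Function_Algebras"
begin

text \<open>A perfect matching of the vertex set V of a loopless multigraph is
  encoded as a fixed-point-free involution m of V (m x is the partner of x).
  A map X = (C_X, v_X, f_X) is encoded by its vertex set V together with the
  three perfect matchings a_X, v_X, f_X whose (multi)union is the cubic graph C_X
  (a_X is automatically a perfect matching since C_X is cubic and v_X, f_X are
  perfect matchings).  The diagonal matching is z_X = v_X o f_X.
  GF(2) is the field bit; a subset of the squares is represented by its
  characteristic vector (a function from squares to bit, zero off the squares).\<close>

definition perfect_matching_on :: "'v set \<Rightarrow> ('v \<Rightarrow> 'v) \<Rightarrow> bool" where
  "perfect_matching_on V m \<longleftrightarrow> (\<forall>x\<in>V. m x \<in> V \<and> m x \<noteq> x \<and> m (m x) = x)"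

text \<open>(V, a, v, f) is a map: v and f disjoint perfect matchings whose union is a
  disjoint union of 4-cycles, a the remaining edges of the cubic graph.\<close>
definition is_map :: "'v set \<Rightarrow> ('v \<Rightarrow> 'v) \<Rightarrow> ('v \<Rightarrow> 'v) \<Rightarrow> ('v \<Rightarrow> 'v) \<Rightarrow> bool" where
  "is_map V a v f \<longleftrightarrow> finite V \<and> perfect_matching_on V a \<and> perfect_matching_on V v
     \<and> perfect_matching_on V f \<and> (\<forall>x\<in>V. v x \<noteq> f x \<and> v (f (v (f x))) = x)"

text \<open>The square (4-cycle of v \<union> f) through x.\<close>
definition square :: "('v \<Rightarrow> 'v) \<Rightarrow> ('v \<Rightarrow> 'v) \<Rightarrow> 'v \<Rightarrow> 'v set" where
  "square v f x = {x, v x, f x, v (f x)}"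

definition squares :: "'v set \<Rightarrow> ('v \<Rightarrow> 'v) \<Rightarrow> ('v \<Rightarrow> 'v) \<Rightarrow> 'v set set" where
  "squares V v f = square v f ` V"

definition cycle_of :: "'v set \<Rightarrow> ('v \<Rightarrow> 'v) \<Rightarrow> ('v \<Rightarrow> 'v) \<Rightarrow> 'v \<Rightarrow> 'v set" where
  "cycle_of V m1 m2 x =
     {y. (x, y) \<in> ({(u, m1 u) | u. u \<in> V} \<union> {(u, m2 u) | u. u \<in> V})\<^sup>*}"

text \<open>Graph G_X of the map (V,a,v,f): vertices are the cycles of v \<union> a, edges
  are the squares, the square through x joining the cycles containing its two
  v-edges {x, v x} and {f x, v (f x)}, i.e. the cycles of x and of f x.\<close>
definition graph_vertices :: "'v set \<Rightarrow> ('v \<Rightarrow> 'v) \<Rightarrow> ('v \<Rightarrow> 'v) \<Rightarrow> 'v set set" where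
  "graph_vertices V a v = cycle_of V v a ` V"

definition coboundary ::
  "'v set \<Rightarrow> ('v \<Rightarrow> 'v) \<Rightarrow> ('v \<Rightarrow> 'v) \<Rightarrow> ('v \<Rightarrow> 'v) \<Rightarrow> 'v set set \<Rightarrow> 'v set set" where
  "coboundary V a v f U =
     {s \<in> squares V v f. \<exists>x\<in>V. s = square v f x \<and>
        ((cycle_of V v a x \<in> U) \<noteq> (cycle_of V v a (f x) \<in> U))}"

definition indic :: "'v set set \<Rightarrow> 'v set \<Rightarrow> bit" where
  "indic A = (\<lambda>s. if s \<in> A then 1 else 0)"

definition gf2_scale :: "bit \<Rightarrow> ('v set \<Rightarrow> bit) \<Rightarrow> ('v set \<Rightarrow> bit)" where
  "gf2_scale c g = (\<lambda>s. c * g s)"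

abbreviation gf2_span where "gf2_span \<equiv> Modules.module.span gf2_scale"
abbreviation gf2_dim where "gf2_dim \<equiv> vector_space.dim gf2_scale"

definition cob_space :: "'v set \<Rightarrow> ('v \<Rightarrow> 'v) \<Rightarrow> ('v \<Rightarrow> 'v) \<Rightarrow> ('v \<Rightarrow> 'v) \<Rightarrow> ('v set \<Rightarrow> bit) set" where
  "cob_space V a v f =
     gf2_span {indic (coboundary V a v f U) | U. U \<subseteq> graph_vertices V a v}"

definition orth :: "'v set set \<Rightarrow> ('v set \<Rightarrow> bit) set \<Rightarrow> ('v set \<Rightarrow> bit) set" where
  "orth S W = {g. (\<forall>s. s \<notin> S \<longrightarrow> g s = 0) \<and> (\<forall>w\<in>W. (\<Sum>s\<in>S. g s * w s) = 0)}"

definition deficiency :: "'v set \<Rightarrow> ('v \<Rightarrow> 'v) \<times> ('v \<Rightarrow> 'v) \<times> ('v \<Rightarrow> 'v) \<Rightarrow> int" where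
  "deficiency V X = (case X of (a, v, f) \<Rightarrow>
     (let Vs = cob_space V a v f;
          Fs = cob_space V a f v;
          Zs = cob_space V a (v \<circ> f) f
      in int (gf2_dim (orth (squares V v f) Vs))
         - int (gf2_dim {x + y | x y. x \<in> Fs \<and> y \<in> Zs})))"

text \<open>Gamma(M) for M = (V,a,v,f), z = v o f.  All six maps have the same vertex set
  and the same a-matching (e.g. (Q\z, v, f) has a-edges Q\(z\<union>v\<union>f) = a).\<close>
definition Gamma :: "('v \<Rightarrow> 'v) \<Rightarrow> ('v \<Rightarrow> 'v) \<Rightarrow> ('v \<Rightarrow> 'v)
     \<Rightarrow> (('v \<Rightarrow> 'v) \<times> ('v \<Rightarrow> 'v) \<times> ('v \<Rightarrow> 'v)) set" where
  "Gamma a v f = (let z = v \<circ> f in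
     {(a, v, f), (a, f, v), (a, f, z), (a, z, f), (a, z, v), (a, v, z)})"

end

theory Submission
  imports Defs
begin

interpretation gf2: vector_space gf2_scale
  by unfold_locales (auto simp: gf2_scale_def fun_eq_iff algebra_simps)

lemma bitfun_self_add[simp]: "(g::'a \<Rightarrow> bit) + g = 0"
  by (simp add: fun_eq_iff)

lemma bit_self_add[simp]: "(c::bit) + c = 0"
  by simp

lemma bitfun_add_cancel[simp]: "(x::'a \<Rightarrow> bit) + g + g = x"
  by (metis add.assoc add.right_neutral bitfun_self_add)

lemma bitfun_aab: "((a::'a\<Rightarrow>bit) + b) + (a + c) = b + c" by (simp add: fun_eq_iff)

lemma sum_fun_apply: "(sum f A) x = (\<Sum>a\<in>A. f a x)" for f :: "'b \<Rightarrow> 'a \<Rightarrow> 'c::comm_monoid_add"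
  by (induction A rule: infinite_finite_induct) auto

lemma gf2_scale_01: "gf2_scale 0 g = 0" "gf2_scale 1 g = g"
  by (auto simp: gf2_scale_def fun_eq_iff)

lemma card_subspace:
  assumes W: "gf2.subspace W" "finite W"
  shows "card W = 2 ^ gf2_dim W"
proof -
  obtain B where B: "B \<subseteq> W" "gf2.independent B" "W \<subseteq> gf2.span B" "card B = gf2_dim W"
    using gf2.basis_exists by blast
  have fB: "finite B" using B(1) W(2) finite_subset by blast
  have spB: "gf2.span B = W" using gf2.span_minimal[OF B(1) W(1)] B(3) by blast
  have key: "(\<Sum>v\<in>B. gf2_scale (if v \<in> T then 1 else 0) v) = \<Sum> T" if "T \<subseteq> B" for T
  proof -
    have "(\<Sum>v\<in>B. gf2_scale (if v \<in> T then 1 else 0) v) = (\<Sum>v\<in>B. if v \<in> T then v else 0)"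
      by (rule sum.cong) (auto simp: gf2_scale_01)
    also have "\<dots> = sum (\<lambda>v. v) (B \<inter> T)" using fB by (simp add: sum.inter_restrict)
    also have "B \<inter> T = T" using that by blast
    finally show ?thesis .
  qed
  have img: "(\<lambda>T. \<Sum> T) ` Pow B = W"
  proof
    show "(\<lambda>T. \<Sum> T) ` Pow B \<subseteq> W"
    proof
      fix w assume "w \<in> (\<lambda>T. \<Sum> T) ` Pow B"
      then obtain T where "T \<subseteq> B" "w = \<Sum> T" by auto
      then have "w \<in> gf2.span B" using gf2.span_sum[of T "\<lambda>x. x" B] gf2.span_base[of _ B] by blast
      then show "w \<in> W" using spB by simp
    qed
    show "W \<subseteq> (\<lambda>T. \<Sum> T) ` Pow B"
    proof
      fix w assume "w \<in> W"
      then have "w \<in> range (\<lambda>u. \<Sum>v\<in>B. gf2_scale (u v) v)" using spB gf2.span_finite[OF fB] by simp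
      then obtain u where u: "w = (\<Sum>v\<in>B. gf2_scale (u v) v)" by auto
      let ?T = "{v\<in>B. u v = 1}"
      have "w = (\<Sum>v\<in>B. gf2_scale (if v \<in> ?T then 1 else 0) v)"
        unfolding u by (rule sum.cong) auto
      then have "w = \<Sum> ?T" using key[of ?T] by auto
      then show "w \<in> (\<lambda>T. \<Sum> T) ` Pow B" by blast
    qed
  qed
  have inj: "inj_on (\<lambda>T. \<Sum> T) (Pow B)"
  proof (rule inj_onI)
    fix T1 T2 assume T: "T1 \<in> Pow B" "T2 \<in> Pow B" and eq: "\<Sum> T1 = \<Sum> T2"
    have f1: "finite T1" "finite T2" using T fB finite_subset by auto
    have "\<Sum> T1 + \<Sum> T2 = 0" using eq by simp
    moreover have "\<Sum> T1 + \<Sum> T2 = \<Sum> ((T1 - T2) \<union> (T2 - T1))"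
    proof -
      have "\<Sum> T1 = \<Sum> (T1 \<inter> T2) + \<Sum> (T1 - T2)" using f1 sum.Int_Diff by blast
      moreover have "\<Sum> T2 = \<Sum> (T1 \<inter> T2) + \<Sum> (T2 - T1)" using f1 sum.Int_Diff
        by (metis Int_commute)
      moreover have "\<Sum> ((T1 - T2) \<union> (T2 - T1)) = \<Sum> (T1 - T2) + \<Sum> (T2 - T1)"
        using f1 by (intro sum.union_disjoint) auto
      moreover have "(\<Sum> (T1 \<inter> T2) + \<Sum> (T1 - T2)) + (\<Sum> (T1 \<inter> T2) + \<Sum> (T2 - T1)) = \<Sum> (T1 - T2) + \<Sum> (T2 - T1)"
        by (rule bitfun_aab)
      ultimately show ?thesis by (simp only:)
    qed
    ultimately have z: "\<Sum> ((T1 - T2) \<union> (T2 - T1)) = 0" by simp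
    let ?D = "(T1 - T2) \<union> (T2 - T1)"
    have DB: "?D \<subseteq> B" using T by blast
    have h0: "(\<Sum>v\<in>B. gf2_scale (if v \<in> ?D then 1 else 0) v) = 0"
      using key[OF DB] z by (simp only:)
    have ind: "\<And>u. (\<Sum>v\<in>B. gf2_scale (u v) v) = 0 \<Longrightarrow> (\<forall>v\<in>B. u v = 0)"
      using B(2) fB unfolding gf2.independent_explicit_finite_subsets by blast
    have allz: "\<forall>v\<in>B. (if v \<in> ?D then 1 else (0::bit)) = 0"
      by (rule ind[of "\<lambda>v. if v \<in> ?D then 1 else 0", OF h0])
    have "?D = {}"
    proof (rule equals0I)
      fix v assume vD: "v \<in> ?D"
      with DB have "v \<in> B" by blast
      with allz have "(if v \<in> ?D then 1 else (0::bit)) = 0" by blast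
      with vD show False by simp
    qed
    then show "T1 = T2" by blast
  qed
  have "card W = card (Pow B)" using card_image[OF inj] img by simp
  also have "\<dots> = 2 ^ card B" using fB card_Pow by blast
  finally show ?thesis using B(4) by simp
qed

definition supp :: "'v set set \<Rightarrow> ('v set \<Rightarrow> bit) set" where
  "supp S = {g. \<forall>s. s \<notin> S \<longrightarrow> g s = 0}"

lemma indic_supp: "T \<subseteq> S \<Longrightarrow> indic T \<in> supp S"
  by (auto simp: supp_def indic_def)

lemma supp_eq: "supp S = indic ` Pow S"
proof
  show "indic ` Pow S \<subseteq> supp S" using indic_supp by blast
  show "supp S \<subseteq> indic ` Pow S"
  proof
    fix g assume g: "g \<in> supp S"
    have "g = indic {s\<in>S. g s = 1}"
      using g by (auto simp: supp_def indic_def fun_eq_iff)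
    then show "g \<in> indic ` Pow S" by blast
  qed
qed

lemma indic_inj: "inj indic"
proof (rule injI)
  fix A B :: "'v set set" assume "indic A = indic B"
  then have "\<forall>s. (s \<in> A) = (s \<in> B)" by (auto simp: indic_def fun_eq_iff split: if_splits)
  then show "A = B" by blast
qed

lemma card_supp: "finite S \<Longrightarrow> card (supp S) = 2 ^ card S"
  by (metis supp_eq card_Pow card_image indic_inj inj_on_subset subset_UNIV)

lemma finite_supp: "finite S \<Longrightarrow> finite (supp S)"
  by (simp add: supp_eq)

lemma subspace_supp: "gf2.subspace (supp S)"
  by (auto simp: gf2.subspace_def supp_def gf2_scale_def)

lemma half_count:
  fixes G :: "('a \<Rightarrow> bit) set" and \<chi> :: "('a \<Rightarrow> bit) \<Rightarrow> bit"
  assumes fin: "finite G" and cl: "\<And>x y. x \<in> G \<Longrightarrow> y \<in> G \<Longrightarrow> x + y \<in> G"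
    and hom: "\<And>x y. x \<in> G \<Longrightarrow> y \<in> G \<Longrightarrow> \<chi> (x + y) = \<chi> x + \<chi> y"
    and gg: "gg \<in> G" "\<chi> gg = 1"
  shows "2 * card {x\<in>G. \<chi> x = 0} = card G"
proof -
  let ?K0 = "{x\<in>G. \<chi> x = 0}" and ?K1 = "{x\<in>G. \<chi> x = 1}"
  have bij: "bij_betw (\<lambda>x. x + gg) ?K0 ?K1"
  proof (rule bij_betw_byWitness[where f'="\<lambda>x. x + gg"])
    show "(\<lambda>x. x + gg) ` ?K0 \<subseteq> ?K1"
    proof
      fix y assume "y \<in> (\<lambda>x. x + gg) ` ?K0"
      then obtain x where x: "x \<in> G" "\<chi> x = 0" and y: "y = x + gg" by blast
      have "\<chi> (x + gg) = 1" using hom[OF x(1) gg(1)] x(2) gg(2) by simp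
      then show "y \<in> ?K1" using cl[OF x(1) gg(1)] y by blast
    qed
    show "(\<lambda>x. x + gg) ` ?K1 \<subseteq> ?K0"
    proof
      fix y assume "y \<in> (\<lambda>x. x + gg) ` ?K1"
      then obtain x where x: "x \<in> G" "\<chi> x = 1" and y: "y = x + gg" by blast
      have "\<chi> (x + gg) = 0" using hom[OF x(1) gg(1)] x(2) gg(2) by simp
      then show "y \<in> ?K0" using cl[OF x(1) gg(1)] y by blast
    qed
  qed (simp_all only: bitfun_add_cancel, blast+)
  have "card ?K0 = card ?K1" using bij bij_betw_same_card by blast
  moreover have "G = ?K0 \<union> ?K1" using bit_not_zero_iff by blast
  moreover have "card (?K0 \<union> ?K1) = card ?K0 + card ?K1"
    using fin by (intro card_Un_disjoint) auto
  ultimately show ?thesis by simp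
qed

lemma bf1: "(a::'a\<Rightarrow>bit) + (b + a) = b"
  by (metis add.commute bitfun_add_cancel)
lemma bf3: "p1 + p2 = x0 + y0 \<Longrightarrow> y0 + (p1 + x0) = (p2::'a\<Rightarrow>bit)"
  by (metis add.assoc add.commute bitfun_add_cancel)
lemma bf4: "p1 + p2 = x0 + y0 \<Longrightarrow> p1 + x0 = p2 + (y0::'a\<Rightarrow>bit)"
  by (metis add.assoc add.commute bitfun_add_cancel)
lemma bf5: "(x0 + t) + (y0 + t) = x0 + (y0::'a\<Rightarrow>bit)"
  by (metis add.assoc add.commute bitfun_add_cancel)

definition ip :: "'v set set \<Rightarrow> ('v set \<Rightarrow> bit) \<Rightarrow> ('v set \<Rightarrow> bit) \<Rightarrow> bit" where
  "ip S g w = (\<Sum>s\<in>S. g s * w s)"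

lemma ip_add1: "ip S (g + h) w = ip S g w + ip S h w"
  unfolding ip_def plus_fun_apply by (simp only: distrib_right sum.distrib)
lemma ip_add2: "ip S g (w + h) = ip S g w + ip S g h"
  unfolding ip_def plus_fun_apply by (simp only: distrib_left sum.distrib)

lemma card_filter_sum: "finite B \<Longrightarrow> card {y\<in>B. P y} = (\<Sum>y\<in>B. if P y then 1 else 0)"
  by (simp only: card_eq_sum sum.inter_filter)

lemma orth_alt: "orth S W = {g \<in> supp S. \<forall>w\<in>W. ip S g w = 0}"
  by (auto simp: orth_def supp_def ip_def)

lemma double_count:
  assumes "finite A" "finite B"
  shows "(\<Sum>x\<in>A. card {y\<in>B. P x y}) = (\<Sum>y\<in>B. card {x\<in>A. P x y})"
proof -
  have "(\<Sum>x\<in>A. card {y\<in>B. P x y}) = (\<Sum>x\<in>A. \<Sum>y\<in>B. if P x y then 1 else 0)"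
    using assms by (simp add: card_filter_sum)
  also have "\<dots> = (\<Sum>y\<in>B. \<Sum>x\<in>A. if P x y then 1 else 0)" by (rule sum.swap)
  also have "\<dots> = (\<Sum>y\<in>B. card {x\<in>A. P x y})"
    using assms by (simp add: card_filter_sum)
  finally show ?thesis .
qed

lemma card_orth:
  assumes S: "finite S" and W: "gf2.subspace W" "W \<subseteq> supp S"
  shows "card (orth S W) * card W = 2 ^ card S"
proof -
  let ?G = "supp S" and ?O = "orth S W" and ?P = "\<lambda>g w. ip S g w = 0"
  have fG: "finite ?G" using S finite_supp by blast
  have fW: "finite W" using W fG finite_subset by blast
  have OG: "?O \<subseteq> ?G" by (auto simp: orth_alt)
  have fO: "finite ?O" using OG fG finite_subset by blast
  have clG: "x + y \<in> ?G" if "x \<in> ?G" "y \<in> ?G" for x y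
    by (rule gf2.subspace_add[OF subspace_supp that])
  have clW: "x + y \<in> W" if "x \<in> W" "y \<in> W" for x y
    by (rule gf2.subspace_add[OF W(1) that])
  have rows: "2 * card {w\<in>W. ?P g w} = card W + (if g \<in> ?O then card W else 0)"
    if g: "g \<in> ?G" for g
  proof (cases "g \<in> ?O")
    case True
    then have "{w\<in>W. ?P g w} = W" by (auto simp: orth_alt)
    then show ?thesis using True by simp
  next
    case False
    then obtain w0 where w0: "w0 \<in> W" "ip S g w0 \<noteq> 0" using g by (auto simp: orth_alt)
    have w01: "ip S g w0 = 1" using w0(2) by simp
    have "2 * card {w\<in>W. ip S g w = 0} = card W"
      by (rule half_count[where G=W and \<chi>="ip S g" and gg=w0, OF fW clW ip_add2 w0(1) w01])
    then show ?thesis using False by simp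
  qed
  have cols: "2 * card {g\<in>?G. ?P g w} = card ?G + (if w = 0 then card ?G else 0)"
    if w: "w \<in> W" for w
  proof (cases "w = 0")
    case True
    then have "{g\<in>?G. ?P g w} = ?G" by (auto simp: ip_def)
    then show ?thesis using True by simp
  next
    case False
    then obtain s0 where s0: "w s0 \<noteq> 0" by (auto simp: fun_eq_iff)
    have s0S: "s0 \<in> S" using s0 w W(2) unfolding supp_def by blast
    let ?g0 = "indic {s0}"
    have "ip S ?g0 w = (\<Sum>s\<in>S. if s = s0 then w s else 0)"
      unfolding ip_def by (rule sum.cong) (auto simp: indic_def)
    also have "\<dots> = w s0" using S s0S by (simp add: sum.delta)
    finally have ipg0: "ip S ?g0 w = 1" using s0 by simp
    have g0in: "?g0 \<in> ?G" using s0S indic_supp by blast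
    have "2 * card {g\<in>?G. ip S g w = 0} = card ?G"
      by (rule half_count[where G="?G" and \<chi>="\<lambda>g. ip S g w" and gg="?g0", OF fG clG ip_add1 g0in ipg0])
    then show ?thesis using False by simp
  qed
  have "2 * (\<Sum>g\<in>?G. card {w\<in>W. ?P g w}) = (\<Sum>g\<in>?G. card W + (if g \<in> ?O then card W else 0))"
    by (simp add: sum_distrib_left rows)
  also have "\<dots> = card ?G * card W + card ?O * card W"
    using fG OG by (simp add: sum.distrib sum.If_cases Int_absorb1)
  finally have e1: "2 * (\<Sum>g\<in>?G. card {w\<in>W. ?P g w}) = card ?G * card W + card ?O * card W" .
  have "2 * (\<Sum>w\<in>W. card {g\<in>?G. ?P g w}) = (\<Sum>w\<in>W. card ?G + (if w = 0 then card ?G else 0))"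
    by (simp add: sum_distrib_left cols)
  also have "\<dots> = card W * card ?G + card ?G"
    using fW gf2.subspace_0[OF W(1)] by (simp add: sum.distrib sum.If_cases Int_absorb1)
  finally have e2: "2 * (\<Sum>w\<in>W. card {g\<in>?G. ?P g w}) = card W * card ?G + card ?G" .
  have "(\<Sum>g\<in>?G. card {w\<in>W. ?P g w}) = (\<Sum>w\<in>W. card {g\<in>?G. ?P g w})"
    by (rule double_count[OF fG fW])
  with e1 e2 have "card ?O * card W = card ?G" by (simp add: mult.commute)
  then show ?thesis using card_supp[OF S] by simp
qed

lemma ip_zero1: "ip S 0 w = 0"
  unfolding ip_def by simp

lemma ip_scale1: "ip S (gf2_scale c g) w = c * ip S g w"
  unfolding ip_def gf2_scale_def by (simp only: sum_distrib_left mult.assoc)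

lemma subspace_orth: "gf2.subspace (orth S W)"
proof (rule gf2.subspaceI)
  show "0 \<in> orth S W" unfolding orth_alt using gf2.subspace_0[OF subspace_supp] ip_zero1 by blast
  show "x + y \<in> orth S W" if "x \<in> orth S W" "y \<in> orth S W" for x y
  proof -
    have "x + y \<in> supp S" using that gf2.subspace_add[OF subspace_supp] unfolding orth_alt by blast
    moreover have "\<forall>w\<in>W. ip S (x + y) w = 0" using that unfolding orth_alt ip_add1 by simp
    ultimately show ?thesis unfolding orth_alt by blast
  qed
  show "gf2_scale c x \<in> orth S W" if "x \<in> orth S W" for c x
  proof -
    have "gf2_scale c x \<in> supp S" using that gf2.subspace_scale[OF subspace_supp] unfolding orth_alt by blast
    moreover have "\<forall>w\<in>W. ip S (gf2_scale c x) w = 0" using that unfolding orth_alt ip_scale1 by simp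
    ultimately show ?thesis unfolding orth_alt by blast
  qed
qed

lemma card_sums:
  assumes A: "gf2.subspace A" "finite A" and B: "gf2.subspace B" "finite B"
  shows "card {x + y | x y. x \<in> A \<and> y \<in> B} * card (A \<inter> B) = card A * card B"
proof -
  let ?AB = "{x + y | x y. x \<in> A \<and> y \<in> B}"
  let ?F = "\<lambda>u. {p\<in>A \<times> B. fst p + snd p = u}"
  have fAB: "finite ?AB"
  proof -
    have "?AB \<subseteq> (\<lambda>p. fst p + snd p) ` (A \<times> B)"
    proof
      fix u assume "u \<in> ?AB"
      then obtain x y where "x \<in> A" "y \<in> B" "u = x + y" by blast
      then show "u \<in> (\<lambda>p. fst p + snd p) ` (A \<times> B)"
        by (intro image_eqI[where x="(x, y)"]) simp_all
    qed
    then show ?thesis by (rule finite_subset) (simp add: A(2) B(2))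
  qed
  have un: "A \<times> B = (\<Union>u\<in>?AB. ?F u)"
  proof
    show "A \<times> B \<subseteq> (\<Union>u\<in>?AB. ?F u)"
    proof
      fix p assume p: "p \<in> A \<times> B"
      then have pa: "fst p \<in> A" "snd p \<in> B" by auto
      have "fst p + snd p \<in> ?AB" using pa by blast
      moreover have "p \<in> ?F (fst p + snd p)" using p by simp
      ultimately show "p \<in> (\<Union>u\<in>?AB. ?F u)" by blast
    qed
    show "(\<Union>u\<in>?AB. ?F u) \<subseteq> A \<times> B" by blast
  qed
  have finF: "finite (?F u)" for u
    by (rule finite_subset[of _ "A \<times> B"]) (auto simp: A(2) B(2))
  have cardF: "card (?F u) = card (A \<inter> B)" if u: "u \<in> ?AB" for u
  proof -
    obtain x0 y0 where xy: "x0 \<in> A" "y0 \<in> B" "u = x0 + y0" using u by blast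
    have "bij_betw (\<lambda>t. (x0 + t, y0 + t)) (A \<inter> B) (?F u)"
    proof (rule bij_betw_byWitness[where f'="\<lambda>p. fst p + x0"])
      show "\<forall>t\<in>A \<inter> B. fst (x0 + t, y0 + t) + x0 = t"
        by (simp only: fst_conv bf1 add.assoc, simp)
      show "\<forall>p\<in>?F u. (x0 + (fst p + x0), y0 + (fst p + x0)) = p"
      proof
        fix p assume "p \<in> ?F u"
        then have h: "fst p + snd p = x0 + y0" using xy by auto
        have "x0 + (fst p + x0) = fst p" by (rule bf1)
        moreover have "y0 + (fst p + x0) = snd p" by (rule bf3[OF h])
        ultimately show "(x0 + (fst p + x0), y0 + (fst p + x0)) = p" by (simp add: prod_eq_iff)
      qed
      show "(\<lambda>t. (x0 + t, y0 + t)) ` (A \<inter> B) \<subseteq> ?F u"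
      proof
        fix q assume "q \<in> (\<lambda>t. (x0 + t, y0 + t)) ` (A \<inter> B)"
        then obtain t where t: "t \<in> A" "t \<in> B" and q: "q = (x0 + t, y0 + t)" by blast
        have "x0 + t \<in> A" by (rule gf2.subspace_add[OF A(1) xy(1) t(1)])
        moreover have "y0 + t \<in> B" by (rule gf2.subspace_add[OF B(1) xy(2) t(2)])
        moreover have "(x0 + t) + (y0 + t) = u" by (simp only: bf5 xy(3))
        ultimately show "q \<in> ?F u" using q by simp
      qed
      show "(\<lambda>p. fst p + x0) ` ?F u \<subseteq> A \<inter> B"
      proof
        fix t assume "t \<in> (\<lambda>p. fst p + x0) ` ?F u"
        then obtain p where p: "fst p \<in> A" "snd p \<in> B" "fst p + snd p = u" and t: "t = fst p + x0"
          by auto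
        have h: "fst p + snd p = x0 + y0" using p(3) xy(3) by simp
        have "fst p + x0 \<in> A" by (rule gf2.subspace_add[OF A(1) p(1) xy(1)])
        moreover have "snd p + y0 \<in> B" by (rule gf2.subspace_add[OF B(1) p(2) xy(2)])
        ultimately show "t \<in> A \<inter> B" using bf4[OF h] t by simp
      qed
    qed
    then show ?thesis by (simp add: bij_betw_same_card)
  qed
  have "card A * card B = card (A \<times> B)" by (simp add: card_cartesian_product)
  also have "\<dots> = (\<Sum>u\<in>?AB. card (?F u))"
  proof -
    have c: "card (\<Union>u\<in>?AB. ?F u) = (\<Sum>u\<in>?AB. card (?F u))"
      using fAB finF by (intro card_UN_disjoint) blast+
    then show ?thesis by (simp only: un[symmetric])
  qed
  also have "\<dots> = (\<Sum>u\<in>?AB. card (A \<inter> B))" using cardF by simp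
  finally show ?thesis by simp
qed

lemma finite_sums:
  assumes "finite A" "finite B"
  shows "finite {x + y | x y. x \<in> A \<and> y \<in> B}"
proof -
  have "{x + y | x y. x \<in> A \<and> y \<in> B} \<subseteq> (\<lambda>p. fst p + snd p) ` (A \<times> B)"
  proof
    fix u assume "u \<in> {x + y | x y. x \<in> A \<and> y \<in> B}"
    then obtain x y where "x \<in> A" "y \<in> B" "u = x + y" by blast
    then show "u \<in> (\<lambda>p. fst p + snd p) ` (A \<times> B)"
      by (intro image_eqI[where x="(x, y)"]) simp_all
  qed
  then show ?thesis by (rule finite_subset) (simp add: assms)
qed

lemma dim_orth:
  assumes S: "finite S" and W: "gf2.subspace W" "W \<subseteq> supp S"
  shows "gf2_dim (orth S W) + gf2_dim W = card S"
proof -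
  have fG: "finite (supp S)" using S by (rule finite_supp)
  have fW: "finite W" using W(2) fG by (rule finite_subset)
  have OG: "orth S W \<subseteq> supp S" by (auto simp: orth_alt)
  have fO: "finite (orth S W)" using OG fG by (rule finite_subset)
  have "(2::nat) ^ (gf2_dim (orth S W) + gf2_dim W) = card (orth S W) * card W"
    using card_subspace[OF subspace_orth fO] card_subspace[OF W(1) fW] by (simp add: power_add)
  also have "\<dots> = 2 ^ card S" using card_orth[OF S W] .
  finally show ?thesis by simp
qed

lemma dim_sums:
  assumes A: "gf2.subspace A" "finite A" and B: "gf2.subspace B" "finite B"
  shows "gf2_dim {x + y | x y. x \<in> A \<and> y \<in> B} + gf2_dim (A \<inter> B) = gf2_dim A + gf2_dim B"
proof -
  have s1: "gf2.subspace {x + y | x y. x \<in> A \<and> y \<in> B}" using gf2.subspace_sums[OF A(1) B(1)] .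
  have f1: "finite {x + y | x y. x \<in> A \<and> y \<in> B}" using finite_sums[OF A(2) B(2)] .
  have s2: "gf2.subspace (A \<inter> B)" using gf2.subspace_inter[OF A(1) B(1)] .
  have f2: "finite (A \<inter> B)" using A(2) by simp
  have "(2::nat) ^ (gf2_dim {x + y | x y. x \<in> A \<and> y \<in> B} + gf2_dim (A \<inter> B))
      = card {x + y | x y. x \<in> A \<and> y \<in> B} * card (A \<inter> B)"
    using card_subspace[OF s1 f1] card_subspace[OF s2 f2] by (simp add: power_add)
  also have "\<dots> = card A * card B" using card_sums[OF A B] .
  also have "\<dots> = 2 ^ (gf2_dim A + gf2_dim B)"
    using card_subspace[OF A] card_subspace[OF B] by (simp add: power_add)
  finally show ?thesis by simp
qed

definition tri :: "'v set \<Rightarrow> ('v \<Rightarrow> 'v) \<Rightarrow> ('v \<Rightarrow> 'v) \<Rightarrow> ('v \<Rightarrow> 'v) \<Rightarrow> ('v \<Rightarrow> 'v) \<Rightarrow> bool" where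
  "tri V a p q r \<longleftrightarrow> perfect_matching_on V a \<and> perfect_matching_on V p \<and> perfect_matching_on V q
     \<and> perfect_matching_on V r \<and> (\<forall>x\<in>V. p (q x) = r x \<and> q (p x) = r x \<and> p (r x) = q x
        \<and> r (p x) = q x \<and> q (r x) = p x \<and> r (q x) = p x)"

lemma tri_swap12: "tri V a p q r \<Longrightarrow> tri V a q p r"
  unfolding tri_def by auto
lemma tri_swap23: "tri V a p q r \<Longrightarrow> tri V a p r q"
  unfolding tri_def by auto

lemma pmD: "perfect_matching_on V m \<Longrightarrow> x \<in> V \<Longrightarrow> m x \<in> V \<and> m (m x) = x"
  unfolding perfect_matching_on_def by blast

lemma cyc_self: "x \<in> cycle_of V p a x"
  unfolding cycle_of_def by simp

lemma cyc_eqI: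
  assumes "(x, y) \<in> R" "(y, x) \<in> R"
  shows "{z. (x, z) \<in> R\<^sup>*} = {z. (y, z) \<in> R\<^sup>*}"
  using assms by (auto intro: converse_rtrancl_into_rtrancl)

lemma cyc_step:
  assumes p: "perfect_matching_on V p" and a: "perfect_matching_on V a" and x: "x \<in> V"
  shows "cycle_of V p a (p x) = cycle_of V p a x" "cycle_of V p a (a x) = cycle_of V p a x"
proof -
  let ?R = "{(u, p u) | u. u \<in> V} \<union> {(u, a u) | u. u \<in> V}"
  have px: "p x \<in> V" "p (p x) = x" using pmD[OF p x] by auto
  have ax: "a x \<in> V" "a (a x) = x" using pmD[OF a x] by auto
  have r1: "(x, p x) \<in> ?R" using x by blast
  have "(p x, p (p x)) \<in> ?R" using px(1) by blast
  then have r2: "(p x, x) \<in> ?R" using px(2) by simp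
  show "cycle_of V p a (p x) = cycle_of V p a x"
    unfolding cycle_of_def by (rule cyc_eqI[OF r2 r1])
  have r3: "(x, a x) \<in> ?R" using x by blast
  have "(a x, a (a x)) \<in> ?R" using ax(1) by blast
  then have r4: "(a x, x) \<in> ?R" using ax(2) by simp
  show "cycle_of V p a (a x) = cycle_of V p a x"
    unfolding cycle_of_def by (rule cyc_eqI[OF r4 r3])
qed

lemma square_tri:
  assumes "tri V a p q r" "x \<in> V"
  shows "square p q x = {x, p x, q x, r x}"
  using assms unfolding tri_def square_def by auto

definition cb where
  "cb V a p q U x \<longleftrightarrow> ((cycle_of V p a x \<in> U) \<noteq> (cycle_of V p a (q x) \<in> U))"

lemma cb_inv:
  assumes t: "tri V a p q r" and x: "x \<in> V" and y: "y \<in> square p q x"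
  shows "cb V a p q U y = cb V a p q U x"
proof -
  have pmp: "perfect_matching_on V p" and pma: "perfect_matching_on V a"
    and pmq: "perfect_matching_on V q"
    and rel: "\<forall>x\<in>V. p (q x) = r x \<and> q (p x) = r x \<and> p (r x) = q x
        \<and> r (p x) = q x \<and> q (r x) = p x \<and> r (q x) = p x"
    using t unfolding tri_def by auto
  let ?c = "cycle_of V p a"
  have qx: "q x \<in> V" "q (q x) = x" using pmD[OF pmq x] by auto
  have c1: "?c (p x) = ?c x" using cyc_step(1)[OF pmp pma x] .
  have c2: "?c (p (q x)) = ?c (q x)" using cyc_step(1)[OF pmp pma qx(1)] .
  have y4: "y = x \<or> y = p x \<or> y = q x \<or> y = r x" using y square_tri[OF t x] by auto
  show ?thesis
  proof -
    { assume "y = x" then have ?thesis by simp }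
    moreover
    { assume yy: "y = p x"
      have "q (p x) = p (q x)" using rel x by metis
      then have ?thesis unfolding cb_def yy using c1 c2 by simp }
    moreover
    { assume yy: "y = q x"
      have ?thesis unfolding cb_def yy qx(2) by blast }
    moreover
    { assume yy: "y = r x"
      have "r x = p (q x)" "q (r x) = p x" using rel x by metis+
      then have ?thesis unfolding cb_def yy using c1 c2 by auto }
    ultimately show ?thesis using y4 by blast
  qed
qed

lemma cob_char:
  assumes t: "tri V a p q r" and x: "x \<in> V"
  shows "square p q x \<in> coboundary V a p q U \<longleftrightarrow> cb V a p q U x"
proof
  assume "square p q x \<in> coboundary V a p q U"
  then obtain y where y: "y \<in> V" "square p q x = square p q y" "cb V a p q U y"
    unfolding coboundary_def cb_def by blast
  have "y \<in> square p q y" unfolding square_def by simp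
  then have "y \<in> square p q x" using y(2) by simp
  then show "cb V a p q U x" using cb_inv[OF t x] y(3) by blast
next
  assume "cb V a p q U x"
  then show "square p q x \<in> coboundary V a p q U"
    unfolding coboundary_def squares_def cb_def using x by blast
qed

lemma coboundary_sub: "coboundary V a p q U \<subseteq> squares V p q"
  unfolding coboundary_def by blast

lemma indic_cob_sq:
  assumes t: "tri V a p q r" and x: "x \<in> V"
  shows "indic (coboundary V a p q U) (square p q x) = (if cb V a p q U x then 1 else 0)"
  unfolding indic_def using cob_char[OF t x] by simp

lemma indic_cob_out:
  assumes "s \<notin> squares V p q"
  shows "indic (coboundary V a p q U) s = 0"
  unfolding indic_def using assms coboundary_sub[of V a p q U] by auto

lemma squares_tri:
  assumes t: "tri V a p q r"
  shows "squares V p q = squares V q p" "squares V p q = squares V p r"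
proof -
  have t2: "tri V a q p r" using tri_swap12[OF t] .
  have t3: "tri V a p r q" using tri_swap23[OF t] .
  have "square p q x = square q p x" if "x \<in> V" for x
    using square_tri[OF t that] square_tri[OF t2 that] by auto
  then show "squares V p q = squares V q p" unfolding squares_def by (rule image_cong[OF refl])
  have "square p q x = square p r x" if "x \<in> V" for x
    using square_tri[OF t that] square_tri[OF t3 that] by auto
  then show "squares V p q = squares V p r" unfolding squares_def by (rule image_cong[OF refl])
qed

lemma squares_obtain:
  assumes "s \<in> squares V p q"
  obtains x where "x \<in> V" "s = square p q x"
  using assms unfolding squares_def by blast

definition cobset where
  "cobset V a p q = {indic (coboundary V a p q U) | U. U \<subseteq> graph_vertices V a p}"

lemma indic_cob_add:
  assumes t: "tri V a p q r"
  shows "indic (coboundary V a p q U1) + indic (coboundary V a p q U2)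
       = indic (coboundary V a p q ((U1 - U2) \<union> (U2 - U1)))"
proof
  fix s
  show "(indic (coboundary V a p q U1) + indic (coboundary V a p q U2)) s
       = indic (coboundary V a p q ((U1 - U2) \<union> (U2 - U1))) s"
  proof (cases "s \<in> squares V p q")
    case True
    then obtain x where x: "x \<in> V" "s = square p q x" by (rule squares_obtain)
    have "cb V a p q ((U1 - U2) \<union> (U2 - U1)) x = (cb V a p q U1 x \<noteq> cb V a p q U2 x)"
      unfolding cb_def by blast
    then show ?thesis unfolding x(2) plus_fun_apply indic_cob_sq[OF t x(1)] by simp
  next
    case False
    then show ?thesis unfolding plus_fun_apply indic_cob_out[OF False] by simp
  qed
qed

lemma cobset_0: "0 \<in> cobset V a p q"
proof -
  have "coboundary V a p q {} = {}" unfolding coboundary_def by blast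
  then have "indic (coboundary V a p q {}) = 0" unfolding indic_def by (simp add: fun_eq_iff)
  then have h0: "0 = indic (coboundary V a p q {}) \<and> {} \<subseteq> graph_vertices V a p" by simp
  show "0 \<in> cobset V a p q" unfolding cobset_def mem_Collect_eq
    by (rule exI[where P="\<lambda>U. 0 = indic (coboundary V a p q U) \<and> U \<subseteq> graph_vertices V a p" and x="{}", OF h0])
qed

lemma cobset_E: assumes "x \<in> cobset V a p q"
  obtains U1 where "U1 \<subseteq> graph_vertices V a p" "x = indic (coboundary V a p q U1)"
  using assms unfolding cobset_def by blast

lemma cobset_add:
  assumes t: "tri V a p q r" and x: "x \<in> cobset V a p q" and y: "y \<in> cobset V a p q"
  shows "x + y \<in> cobset V a p q"
proof -
  obtain U1 where U1: "U1 \<subseteq> graph_vertices V a p" "x = indic (coboundary V a p q U1)"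
    using x by (rule cobset_E)
  obtain U2 where U2: "U2 \<subseteq> graph_vertices V a p" "y = indic (coboundary V a p q U2)"
    using y by (rule cobset_E)
  have "(U1 - U2) \<union> (U2 - U1) \<subseteq> graph_vertices V a p" using U1(1) U2(1) by blast
  moreover have "x + y = indic (coboundary V a p q ((U1 - U2) \<union> (U2 - U1)))"
    unfolding U1(2) U2(2) by (rule indic_cob_add[OF t])
  ultimately have h1: "x + y = indic (coboundary V a p q ((U1 - U2) \<union> (U2 - U1)))
     \<and> (U1 - U2) \<union> (U2 - U1) \<subseteq> graph_vertices V a p" by blast
  show ?thesis unfolding cobset_def mem_Collect_eq
    by (rule exI[where P="\<lambda>U. x + y = indic (coboundary V a p q U) \<and> U \<subseteq> graph_vertices V a p", OF h1])
qed

lemma cobset_scale: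
  assumes x: "x \<in> cobset V a p q"
  shows "gf2_scale c x \<in> cobset V a p q"
proof (cases "c = 0")
  case True
  then have "gf2_scale c x = 0" by (simp only: gf2_scale_01)
  then show ?thesis using cobset_0 by metis
next
  case False
  then have "c = 1" by simp
  then have "gf2_scale c x = x" by (simp only: gf2_scale_01)
  then show ?thesis using x by simp
qed

lemma subspace_cobset:
  assumes t: "tri V a p q r"
  shows "gf2.subspace (cobset V a p q)"
  using cobset_0 cobset_add[OF t] cobset_scale by (rule gf2.subspaceI)

lemma cob_space_set:
  assumes t: "tri V a p q r"
  shows "cob_space V a p q = cobset V a p q"
  unfolding cob_space_def cobset_def[symmetric] using subspace_cobset[OF t] gf2.span_eq_iff by blast

lemma cobset_supp: "cobset V a p q \<subseteq> supp (squares V p q)"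
proof
  fix g assume "g \<in> cobset V a p q"
  then obtain U where "g = indic (coboundary V a p q U)" by (rule cobset_E)
  then show "g \<in> supp (squares V p q)" using indic_supp[OF coboundary_sub] by simp
qed

lemma cob_mem:
  assumes t: "tri V a p q r"
  shows "s \<in> coboundary V a p q U \<longleftrightarrow> (\<exists>x\<in>V. s = square p q x \<and> cb V a p q U x)"
proof
  assume "s \<in> coboundary V a p q U"
  then show "\<exists>x\<in>V. s = square p q x \<and> cb V a p q U x" unfolding coboundary_def cb_def by blast
next
  assume "\<exists>x\<in>V. s = square p q x \<and> cb V a p q U x"
  then obtain x where "x \<in> V" "s = square p q x" "cb V a p q U x" by blast
  then show "s \<in> coboundary V a p q U" using cob_char[OF t] by simp
qed

lemma cob_partner:
  assumes t: "tri V a p q r"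
  shows "cob_space V a p q = cob_space V a p r"
proof -
  have t3: "tri V a p r q" using tri_swap23[OF t] .
  have pmp: "perfect_matching_on V p" and pma: "perfect_matching_on V a"
    and pmq: "perfect_matching_on V q"
    and rel: "\<forall>x\<in>V. p (q x) = r x"
    using t unfolding tri_def by auto
  have pt: "square p q x = square p r x \<and> cb V a p q U x = cb V a p r U x" if x: "x \<in> V" for x U
  proof
    show "square p q x = square p r x" using square_tri[OF t x] square_tri[OF t3 x] by auto
    have qx: "q x \<in> V" using pmD[OF pmq x] by auto
    have rx: "r x = p (q x)" using rel x by simp
    have "cycle_of V p a (r x) = cycle_of V p a (q x)"
      unfolding rx by (rule cyc_step(1)[OF pmp pma qx])
    then show "cb V a p q U x = cb V a p r U x" unfolding cb_def by simp
  qed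
  have "coboundary V a p q U = coboundary V a p r U" for U
  proof (rule set_eqI)
    fix s
    have "s \<in> coboundary V a p q U \<longleftrightarrow> (\<exists>x\<in>V. s = square p q x \<and> cb V a p q U x)" by (rule cob_mem[OF t])
    also have "\<dots> \<longleftrightarrow> (\<exists>x\<in>V. s = square p r x \<and> cb V a p r U x)" 
    proof (rule bex_cong[OF refl])
      fix x assume "x \<in> V"
      then show "(s = square p q x \<and> cb V a p q U x) = (s = square p r x \<and> cb V a p r U x)"
        using pt by simp
    qed
    also have "\<dots> \<longleftrightarrow> s \<in> coboundary V a p r U" by (rule cob_mem[OF t3, symmetric])
    finally show "s \<in> coboundary V a p q U \<longleftrightarrow> s \<in> coboundary V a p r U" .
  qed
  then show ?thesis unfolding cob_space_def by simp
qed

lemma cob_cong: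
  assumes p: "\<forall>x\<in>V. p x = p' x" and q: "\<forall>x\<in>V. q x = q' x" and qV: "\<forall>x\<in>V. q x \<in> V"
  shows "cob_space V a p q = cob_space V a p' q'"
proof -
  have rel: "{(u, p u) | u. u \<in> V} = {(u, p' u) | u. u \<in> V}" using p by force
  have cyc: "cycle_of V p a = cycle_of V p' a" unfolding cycle_of_def rel ..
  have sq: "square p q x = square p' q' x" if "x \<in> V" for x
    unfolding square_def using p q qV that by metis
  have sqs: "squares V p q = squares V p' q'" unfolding squares_def using sq by (rule image_cong[OF refl])
  have gv: "graph_vertices V a p = graph_vertices V a p'" unfolding graph_vertices_def cyc ..
  have cob: "coboundary V a p q U = coboundary V a p' q' U" for U
    unfolding coboundary_def sqs cyc
  proof (rule Collect_cong)
    fix s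
    show "(s \<in> squares V p' q' \<and> (\<exists>x\<in>V. s = square p q x \<and>
            (cycle_of V p' a x \<in> U) \<noteq> (cycle_of V p' a (q x) \<in> U))) =
          (s \<in> squares V p' q' \<and> (\<exists>x\<in>V. s = square p' q' x \<and>
            (cycle_of V p' a x \<in> U) \<noteq> (cycle_of V p' a (q' x) \<in> U)))"
      using sq q by (metis (no_types, lifting))
  qed
  show ?thesis unfolding cob_space_def gv cob ..
qed

lemma cob_inter:
  assumes t: "tri V a p q r" and g1: "g \<in> cobset V a p q" and g2: "g \<in> cobset V a q p"
  shows "g \<in> cobset V a r p"
proof -
  have t12: "tri V a q p r" using tri_swap12[OF t] .
  have t13: "tri V a q r p" using tri_swap23[OF t12] .
  have t14: "tri V a r q p" using tri_swap12[OF t13] .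
  have trp: "tri V a r p q" using tri_swap23[OF t14] .
  have pmp: "perfect_matching_on V p" and pma: "perfect_matching_on V a"
    and pmq: "perfect_matching_on V q" and pmr: "perfect_matching_on V r"
    and rel: "\<forall>x\<in>V. p (q x) = r x \<and> q (p x) = r x"
    using t unfolding tri_def by auto
  obtain U where U: "U \<subseteq> graph_vertices V a p" "g = indic (coboundary V a p q U)"
    using g1 by (rule cobset_E)
  obtain U' where U': "U' \<subseteq> graph_vertices V a q" "g = indic (coboundary V a q p U')"
    using g2 by (rule cobset_E)
  define W where "W x \<longleftrightarrow> cycle_of V p a x \<in> U" for x
  define W' where "W' x \<longleftrightarrow> cycle_of V q a x \<in> U'" for x
  define X where "X x \<longleftrightarrow> (W x \<noteq> W' x)" for x
  have hyp: "(W x \<noteq> W (q x)) = (W' x \<noteq> W' (p x))" if x: "x \<in> V" for x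
  proof -
    have sqe: "square p q x = square q p x"
      using square_tri[OF t x] square_tri[OF t12 x] by auto
    have "g (square p q x) = (if cb V a p q U x then 1 else 0)"
      unfolding U(2) by (rule indic_cob_sq[OF t x])
    moreover have "g (square p q x) = (if cb V a q p U' x then 1 else 0)"
      unfolding sqe U'(2) by (rule indic_cob_sq[OF t12 x])
    ultimately have "cb V a p q U x = cb V a q p U' x" by (auto split: if_splits)
    then show ?thesis unfolding cb_def W_def W'_def .
  qed
  have stepX: "X (r z) = X z \<and> X (a z) = X z" if z: "z \<in> V" for z
  proof
    have qz: "q z \<in> V" using pmD[OF pmq z] by auto
    have pz: "p z \<in> V" using pmD[OF pmp z] by auto
    have r1: "r z = p (q z)" "r z = q (p z)" using rel z by auto
    have "W (r z) = W (q z)" unfolding W_def r1(1) cyc_step(1)[OF pmp pma qz] ..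
    moreover have "W' (r z) = W' (p z)" unfolding W'_def r1(2) cyc_step(1)[OF pmq pma pz] ..
    ultimately show "X (r z) = X z" unfolding X_def using hyp[OF z] by blast
    have "W (a z) = W z" unfolding W_def cyc_step(2)[OF pmp pma z] ..
    moreover have "W' (a z) = W' z" unfolding W'_def cyc_step(2)[OF pmq pma z] ..
    ultimately show "X (a z) = X z" unfolding X_def by simp
  qed
  let ?R = "{(u, r u) | u. u \<in> V} \<union> {(u, a u) | u. u \<in> V}"
  have inv: "X y = X x" if x: "x \<in> V" and xy: "(x, y) \<in> ?R\<^sup>*" for x y
    using xy
  proof (induction rule: rtrancl_induct)
    case base
    then show ?case by simp
  next
    case (step y z)
    then obtain u where "u \<in> V" "y = u" "z = r u \<or> z = a u" by blast
    then show ?case using stepX step.IH by auto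
  qed
  define U'' where "U'' = {cycle_of V r a x | x. x \<in> V \<and> X x}"
  have U''gv: "U'' \<subseteq> graph_vertices V a r" unfolding U''_def graph_vertices_def by blast
  have memU'': "cycle_of V r a x \<in> U'' \<longleftrightarrow> X x" if x: "x \<in> V" for x
  proof
    assume "cycle_of V r a x \<in> U''"
    then have "\<exists>y. cycle_of V r a x = cycle_of V r a y \<and> y \<in> V \<and> X y"
      unfolding U''_def by (simp only: mem_Collect_eq)
    then obtain y where y: "y \<in> V" "X y" "cycle_of V r a x = cycle_of V r a y" by blast
    have "x \<in> cycle_of V r a x" by (rule cyc_self)
    then have "x \<in> cycle_of V r a y" using y(3) by simp
    then have "(y, x) \<in> ?R\<^sup>*" unfolding cycle_of_def by (simp only: mem_Collect_eq)
    then have "X x = X y" by (rule inv[OF y(1)])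
    then show "X x" using y(2) by simp
  next
    assume "X x"
    then show "cycle_of V r a x \<in> U''" unfolding U''_def using x by blast
  qed
  have sqrp: "squares V r p = squares V p q"
    using squares_tri(2)[OF t] squares_tri(1)[OF trp] by simp
  have "g = indic (coboundary V a r p U'')"
  proof
    fix s
    show "g s = indic (coboundary V a r p U'') s"
    proof (cases "s \<in> squares V r p")
      case True
      then obtain x where x: "x \<in> V" "s = square r p x" by (rule squares_obtain)
      have px: "p x \<in> V" using pmD[OF pmp x(1)] by auto
      have sqe: "square r p x = square p q x"
        using square_tri[OF t x(1)] square_tri[OF trp x(1)] by auto
      have "W (p x) = W x" unfolding W_def cyc_step(1)[OF pmp pma x(1)] ..
      then have "cb V a r p U'' x = cb V a p q U x"
        unfolding cb_def memU''[OF x(1)] memU''[OF px] X_def using hyp[OF x(1)]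
        unfolding W_def by blast
      moreover have "indic (coboundary V a r p U'') s = (if cb V a r p U'' x then 1 else 0)"
        unfolding x(2) by (rule indic_cob_sq[OF trp x(1)])
      moreover have "g s = (if cb V a p q U x then 1 else 0)"
        unfolding x(2) sqe U(2) by (rule indic_cob_sq[OF t x(1)])
      ultimately show ?thesis by simp
    next
      case False
      then have F2: "s \<notin> squares V p q" using sqrp by simp
      show ?thesis unfolding U(2) indic_cob_out[OF False] indic_cob_out[OF F2] ..
    qed
  qed
  then have "g = indic (coboundary V a r p U'') \<and> U'' \<subseteq> graph_vertices V a r" using U''gv by blast
  then show ?thesis unfolding cobset_def mem_Collect_eq
    by (rule exI[where P="\<lambda>U. g = indic (coboundary V a r p U) \<and> U \<subseteq> graph_vertices V a r"])
qed

lemma tri_map: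
  assumes m: "is_map V a v f"
  shows "tri V a v f (v \<circ> f)"
proof -
  have pma: "perfect_matching_on V a" and pmv: "perfect_matching_on V v" and pmf: "perfect_matching_on V f"
    and h: "\<forall>x\<in>V. v x \<noteq> f x \<and> v (f (v (f x))) = x"
    using m unfolding is_map_def by auto
  have vV: "v x \<in> V" "v (v x) = x" if "x \<in> V" for x using pmD[OF pmv that] by auto
  have fV: "f x \<in> V" "f (f x) = x" if "x \<in> V" for x using pmD[OF pmf that] by auto
  have h1: "v (f (v (f x))) = x" if "x \<in> V" for x using h that by blast
  have h2: "f (v (f x)) = v x" if x: "x \<in> V" for x
  proof -
    have "v (v (f (v (f x)))) = v x" using h1[OF x] by simp
    then show ?thesis using vV(2)[OF fV(1)[OF vV(1)[OF fV(1)[OF x]]]] by simp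
  qed
  have h3: "v (f (v x)) = f x" if x: "x \<in> V" for x
    using h1[OF fV(1)[OF x]] fV(2)[OF x] by simp
  have fv: "f (v x) = v (f x)" if x: "x \<in> V" for x
  proof -
    have "v (v (f (v x))) = v (f x)" using h3[OF x] by simp
    then show ?thesis using vV(2)[OF fV(1)[OF vV(1)[OF x]]] by simp
  qed
  have pmz: "perfect_matching_on V (v \<circ> f)"
    unfolding perfect_matching_on_def
  proof
    fix x assume x: "x \<in> V"
    have "(v \<circ> f) x \<in> V" using vV(1)[OF fV(1)[OF x]] by simp
    moreover have "(v \<circ> f) x \<noteq> x"
    proof
      assume "(v \<circ> f) x = x"
      then have "v (v (f x)) = v x" by simp
      then have "f x = v x" using vV(2)[OF fV(1)[OF x]] by simp
      then show False using h x by metis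
    qed
    moreover have "(v \<circ> f) ((v \<circ> f) x) = x" using h1[OF x] by simp
    ultimately show "(v \<circ> f) x \<in> V \<and> (v \<circ> f) x \<noteq> x \<and> (v \<circ> f) ((v \<circ> f) x) = x" by blast
  qed
  have rel: "v (f x) = (v \<circ> f) x \<and> f (v x) = (v \<circ> f) x \<and> v ((v \<circ> f) x) = f x
        \<and> (v \<circ> f) (v x) = f x \<and> f ((v \<circ> f) x) = v x \<and> (v \<circ> f) (f x) = v x" if x: "x \<in> V" for x
    using fv[OF x] vV(2)[OF fV(1)[OF x]] h3[OF x] h2[OF x] fV(2)[OF x] by simp
  show ?thesis unfolding tri_def using pma pmv pmf pmz rel by blast
qed

lemma cobspace_supp:
  assumes t: "tri V a p q r"
  shows "gf2.subspace (cob_space V a p q)" "cob_space V a p q \<subseteq> supp (squares V p q)"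
    "finite V \<Longrightarrow> finite (cob_space V a p q)"
proof -
  show "gf2.subspace (cob_space V a p q)" unfolding cob_space_set[OF t] by (rule subspace_cobset[OF t])
  show sub: "cob_space V a p q \<subseteq> supp (squares V p q)" unfolding cob_space_set[OF t] by (rule cobset_supp)
  assume "finite V"
  then have "finite (squares V p q)" unfolding squares_def by simp
  then have "finite (supp (squares V p q))" by (rule finite_supp)
  then show "finite (cob_space V a p q)" using sub by (rule finite_subset[rotated])
qed

lemma def_formula:
  assumes t: "tri V a p q r" and fin: "finite V"
  shows "deficiency V (a, p, q) = int (card (squares V p q)) - int (gf2_dim (cob_space V a p q))
     - int (gf2_dim (cob_space V a q p)) - int (gf2_dim (cob_space V a r p))
     + int (gf2_dim (cob_space V a p q \<inter> cob_space V a q p \<inter> cob_space V a r p))"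
proof -
  have t12: "tri V a q p r" using tri_swap12[OF t] .
  have t13: "tri V a q r p" using tri_swap23[OF t12] .
  have t14: "tri V a r q p" using tri_swap12[OF t13] .
  have trp: "tri V a r p q" using tri_swap23[OF t14] .
  have pmq: "perfect_matching_on V q" and rel: "\<forall>x\<in>V. p (q x) = r x"
    using t unfolding tri_def by auto
  let ?S = "squares V p q"
  let ?P = "cob_space V a p q" and ?Q = "cob_space V a q p" and ?R = "cob_space V a r p"
  have Z: "cob_space V a (p \<circ> q) q = ?R"
  proof -
    have "cob_space V a (p \<circ> q) q = cob_space V a r q"
      by (rule cob_cong) (use rel pmD[OF pmq] in auto)
    also have "\<dots> = ?R" using cob_partner[OF trp] by simp
    finally show ?thesis .
  qed
  have d: "deficiency V (a, p, q) = int (gf2_dim (orth ?S ?P)) - int (gf2_dim {x + y | x y. x \<in> ?Q \<and> y \<in> ?R})"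
    unfolding deficiency_def Let_def by (simp only: prod.case Z)
  have finS: "finite ?S" using fin unfolding squares_def by simp
  have o: "gf2_dim (orth ?S ?P) + gf2_dim ?P = card ?S"
    using dim_orth[OF finS cobspace_supp(1)[OF t] cobspace_supp(2)[OF t]] .
  have s: "gf2_dim {x + y | x y. x \<in> ?Q \<and> y \<in> ?R} + gf2_dim (?Q \<inter> ?R) = gf2_dim ?Q + gf2_dim ?R"
    using dim_sums[OF cobspace_supp(1)[OF t12] cobspace_supp(3)[OF t12 fin]
        cobspace_supp(1)[OF trp] cobspace_supp(3)[OF trp fin]] .
  have QR: "?Q \<inter> ?R = ?P \<inter> ?Q \<inter> ?R"
  proof -
    have "g \<in> ?P" if g: "g \<in> ?Q" "g \<in> ?R" for g
    proof -
      have "g \<in> cobset V a q r" using g(1) cob_partner[OF t12] cob_space_set[OF t13] by simp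
      moreover have "g \<in> cobset V a r q" using g(2) cob_partner[OF trp] cob_space_set[OF t14] by simp
      ultimately have "g \<in> cobset V a p q" by (rule cob_inter[OF t13])
      then show ?thesis using cob_space_set[OF t] by simp
    qed
    then show ?thesis by blast
  qed
  show ?thesis using d o s QR by simp
qed

theorem lemma2p4:
  fixes V :: "'v set" and a v f :: "'v \<Rightarrow> 'v"
  assumes "is_map V a v f"
    and "X \<in> Gamma a v f" and "Y \<in> Gamma a v f"
  shows "deficiency V X = deficiency V Y"
proof -
  let ?z = "v \<circ> f"
  have fin: "finite V" using assms(1) unfolding is_map_def by blast
  have t1: "tri V a v f ?z" using tri_map[OF assms(1)] .
  have t2: "tri V a f v ?z" using tri_swap12[OF t1] .
  have t3: "tri V a f ?z v" using tri_swap23[OF t2] .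
  have t4: "tri V a ?z f v" using tri_swap12[OF t3] .
  have t5: "tri V a ?z v f" using tri_swap23[OF t4] .
  have t6: "tri V a v ?z f" using tri_swap12[OF t5] .
  have c1: "cob_space V a v ?z = cob_space V a v f" using cob_partner[OF t1] by simp
  have c2: "cob_space V a f ?z = cob_space V a f v" using cob_partner[OF t2] by simp
  have c3: "cob_space V a ?z f = cob_space V a ?z v" using cob_partner[OF t5] by simp
  have s1: "squares V f v = squares V v f" using squares_tri(1)[OF t1] by simp
  have s2: "squares V f ?z = squares V v f" using squares_tri(2)[OF t2] s1 by simp
  have s3: "squares V ?z f = squares V v f" using squares_tri(1)[OF t4] s2 by simp
  have s4: "squares V ?z v = squares V v f" using squares_tri(2)[OF t4] s3 by simp
  have s5: "squares V v ?z = squares V v f" using squares_tri(2)[OF t1] by simp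
  define A where "A = cob_space V a v f"
  define B where "B = cob_space V a f v"
  define C where "C = cob_space V a ?z v"
  define D where "D = int (card (squares V v f)) - int (gf2_dim A) - int (gf2_dim B) - int (gf2_dim C)
     + int (gf2_dim (A \<inter> B \<inter> C))"
  have e1: "deficiency V (a, v, f) = D"
    using def_formula[OF t1 fin] unfolding D_def A_def B_def C_def c1 c2 c3 s1 s2 s3 s4 s5
    by (simp add: Int_ac)
  have e2: "deficiency V (a, f, v) = D"
    using def_formula[OF t2 fin] unfolding D_def A_def B_def C_def c1 c2 c3 s1 s2 s3 s4 s5
    by (simp add: Int_ac)
  have e3: "deficiency V (a, f, ?z) = D"
    using def_formula[OF t3 fin] unfolding D_def A_def B_def C_def c1 c2 c3 s1 s2 s3 s4 s5
    by (simp add: Int_ac)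
  have e4: "deficiency V (a, ?z, f) = D"
    using def_formula[OF t4 fin] unfolding D_def A_def B_def C_def c1 c2 c3 s1 s2 s3 s4 s5
    by (simp add: Int_ac)
  have e5: "deficiency V (a, ?z, v) = D"
    using def_formula[OF t5 fin] unfolding D_def A_def B_def C_def c1 c2 c3 s1 s2 s3 s4 s5
    by (simp add: Int_ac)
  have e6: "deficiency V (a, v, ?z) = D"
    using def_formula[OF t6 fin] unfolding D_def A_def B_def C_def c1 c2 c3 s1 s2 s3 s4 s5
    by (simp add: Int_ac)
  have all: "deficiency V W = D" if "W \<in> Gamma a v f" for W
    using that e1 e2 e3 e4 e5 e6 unfolding Gamma_def Let_def by blast
  show ?thesis using all[OF assms(2)] all[OF assms(3)] by simp
qed

end
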